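(* Let $M$ and $N$ be positive integers. For an integer $N_{\rm in}$, put $N_{\rm ou}=N-N_{\rm in}$. Call $N_{\rm in}$ feasible if it forms a (genuine) two-level nested array, i.e. $N_{\rm in}\ge 1$ and $N_{\rm ou}\ge 2$ (equivalently $N_{\rm in}\in\{1,2,\dots,N-2\}$), and it satisfies the dimension constraint $$N_{\rm ou}(N_{\rm in}+1)d-d\le (M-1)d,$$ where $d>0$. Define $$N_{\rm in}^l=\left\lfloor \frac{(N-1)-\sqrt{(N+1)^2-4M}}{2}\right\rfloor,\qquad N_{\rm in}^u=\left\lceil \frac{(N-1)+\sqrt{(N+1)^2-4M}}{2}\right\rceil .$$ Then the set $\mathcal S_{\rm NA}$ of feasible $N_{\rm in}$ is: (i) $\mathcal S_{\rm NA}=\{1,2,\dots,N-2\}$ if $\frac{(N+1)^2}{4}\le M$; (ii) $\mathcal S_{\rm NA}=\{1,\dots,N_{\rm in}^l\}\cup\{N_{\rm in}^u,\dots,N-2\}$ if $\frac{(N+1)^2}{4}> M$ and $N_{\rm in}^l\ge 1$.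
   Context: Setting: a uniform linear array of $M$ antenna pixels with adjacent spacing $d$ (physical dimension $(M-1)d$), from which $N$ pixels are activated to form a two-level nested array: an inner compact array of $N_{\rm in}$ pixels with spacing $d$, followed by an outer uniform array of $N_{\rm ou}=N-N_{\rm in}$ pixels with spacing $(N_{\rm in}+1)d$, the last inner pixel and first outer pixel being separated by $d$. Its physical dimension is $N_{\rm ou}(N_{\rm in}+1)d-d$, which must not exceed that of the original array. The cases $N_{\rm in}=0$ or $N_{\rm ou}\in\{0,1\}$ are excluded since the array then reduces to a compact array. *)

theory Defs
  imports Complex_Main
begin

definition feasible_NA :: "int \<Rightarrow> int \<Rightarrow> real \<Rightarrow> int \<Rightarrow> bool" where
  "feasible_NA M N d Nin \<longleftrightarrow>
     Nin \<ge> 1 \<and> N - Nin \<ge> 2 \<and>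
     real_of_int (N - Nin) * real_of_int (Nin + 1) * d - d \<le> real_of_int (M - 1) * d"

definition S_NA :: "int \<Rightarrow> int \<Rightarrow> real \<Rightarrow> int set" where
  "S_NA M N d = {Nin. feasible_NA M N d Nin}"

definition Nin_l :: "int \<Rightarrow> int \<Rightarrow> int" where
  "Nin_l M N = \<lfloor>(real_of_int (N - 1) - sqrt (real_of_int ((N + 1)^2 - 4 * M))) / 2\<rfloor>"

definition Nin_u :: "int \<Rightarrow> int \<Rightarrow> int" where
  "Nin_u M N = \<lceil>(real_of_int (N - 1) + sqrt (real_of_int ((N + 1)^2 - 4 * M))) / 2\<rceil>"

end

theory Submission
  imports Defs
begin

lemma feas_iff:
  fixes M N x :: int and d :: real
  assumes "d > 0"
  shows "feasible_NA M N d x \<longleftrightarrow> x \<ge> 1 \<and> N - x \<ge> 2 \<and> (N+1)^2 - 4*M \<le> (2*x-N+1)^2"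
proof -
  have "real_of_int (N - x) * real_of_int (x + 1) * d - d \<le> real_of_int (M - 1) * d
        \<longleftrightarrow> (real_of_int (N - x) * real_of_int (x + 1) - 1) * d \<le> real_of_int (M - 1) * d"
    by (simp add: algebra_simps)
  also have "\<dots> \<longleftrightarrow> real_of_int (N - x) * real_of_int (x + 1) - 1 \<le> real_of_int (M - 1)"
    using assms by simp
  also have "\<dots> \<longleftrightarrow> real_of_int ((N - x) * (x + 1)) \<le> real_of_int M"
    by simp
  also have "\<dots> \<longleftrightarrow> (N - x) * (x + 1) \<le> M"
    by (simp only: of_int_le_iff)
  also have "\<dots> \<longleftrightarrow> (N+1)^2 - 4*M \<le> (2*x-N+1)^2"
    by (simp add: power2_eq_square algebra_simps; arith)
  finally show ?thesis unfolding feasible_NA_def by blast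
qed

theorem proposition1:
  fixes M N :: int and d :: real
  assumes "M > 0" and "N > 0" and "d > 0"
  shows "(real_of_int ((N + 1)^2) / 4 \<le> real_of_int M \<longrightarrow> S_NA M N d = {1..N - 2})
       \<and> (real_of_int ((N + 1)^2) / 4 > real_of_int M \<and> Nin_l M N \<ge> 1 \<longrightarrow>
            S_NA M N d = {1..Nin_l M N} \<union> {Nin_u M N..N - 2})"
proof (intro conjI impI)
  assume h: "real_of_int ((N + 1)^2) / 4 \<le> real_of_int M"
  then have "(N+1)^2 \<le> 4*M" by linarith
  moreover have "0 \<le> (2*x-N+1)^2" for x :: int by simp
  ultimately show "S_NA M N d = {1..N - 2}"
    unfolding S_NA_def by (intro set_eqI) (smt (verit) feas_iff[OF assms(3)] mem_Collect_eq atLeastAtMost_iff)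
next
  assume h: "real_of_int ((N + 1)^2) / 4 > real_of_int M \<and> Nin_l M N \<ge> 1"
  define D where "D = (N+1)^2 - 4*M"
  define s where "s = sqrt (real_of_int D)"
  have Dp: "D > 0" using h unfolding D_def by linarith
  have s0: "s \<ge> 0" and s2: "s^2 = real_of_int D" using Dp unfolding s_def by auto
  have l: "Nin_l M N = \<lfloor>(real_of_int (N - 1) - s) / 2\<rfloor>" unfolding Nin_l_def s_def D_def ..
  have u: "Nin_u M N = \<lceil>(real_of_int (N - 1) + s) / 2\<rceil>" unfolding Nin_u_def s_def D_def ..
  have key: "D \<le> (2*x-N+1)^2 \<longleftrightarrow> x \<le> Nin_l M N \<or> Nin_u M N \<le> x" for x
  proof -
    have "D \<le> (2*x-N+1)^2 \<longleftrightarrow> s^2 \<le> (real_of_int (2*x-N+1))^2"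
      using s2 by (metis of_int_le_iff of_int_power)
    also have "\<dots> \<longleftrightarrow> s \<le> \<bar>real_of_int (2*x-N+1)\<bar>"
      using s0 by (metis abs_of_nonneg power2_abs abs_ge_zero power2_le_iff_abs_le real_sqrt_abs real_sqrt_le_iff)
    also have "\<dots> \<longleftrightarrow> real_of_int x \<le> (real_of_int (N - 1) - s) / 2 \<or> (real_of_int (N - 1) + s) / 2 \<le> real_of_int x"
      by (auto simp: abs_if field_simps)
    also have "\<dots> \<longleftrightarrow> x \<le> Nin_l M N \<or> Nin_u M N \<le> x"
      unfolding l u by (simp add: le_floor_iff ceiling_le_iff)
    finally show ?thesis .
  qed
  have lr: "Nin_l M N \<le> N - 2"
  proof -
    have "real_of_int (Nin_l M N) \<le> (real_of_int (N - 1) - s) / 2" unfolding l by linarith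
    then have "real_of_int (Nin_l M N) \<le> real_of_int (N - 1) / 2"
      using s0 divide_right_mono[of "real_of_int (N - 1) - s" "real_of_int (N - 1)" 2] by linarith
    then have "real_of_int (2 * Nin_l M N) \<le> real_of_int (N - 1)" by simp
    then have "2 * Nin_l M N \<le> N - 1" by (simp only: of_int_le_iff)
    then show ?thesis using h by linarith
  qed
  have ur: "1 \<le> Nin_u M N"
  proof -
    have "(real_of_int (N - 1) + s) / 2 \<le> real_of_int (Nin_u M N)" unfolding u by linarith
    then have "real_of_int (N - 1) / 2 \<le> real_of_int (Nin_u M N)"
      using s0 divide_right_mono[of "real_of_int (N - 1)" "real_of_int (N - 1) + s" 2] by linarith
    then have "real_of_int (N - 1) \<le> real_of_int (2 * Nin_u M N)" by simp
    then have "N - 1 \<le> 2 * Nin_u M N" by (simp only: of_int_le_iff)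
    then show ?thesis using lr h by linarith
  qed
  show "S_NA M N d = {1..Nin_l M N} \<union> {Nin_u M N..N - 2}"
    unfolding S_NA_def D_def[symmetric] by (intro set_eqI) (smt (verit) feas_iff[OF assms(3)] key lr ur mem_Collect_eq atLeastAtMost_iff Un_iff D_def)
qed

end
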